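(* For every integer $r \ge 2$ there exists $N = N(r)$ such that for all integers $n \ge N$, \[ \hat{R}(P_n, r) < 600 (\log r)\, r^2 n . \]
   Context: $P_n$ denotes the path on $n$ vertices. For a graph $F$ and an integer $r\ge 1$, write $G \to (F)_r$ if every colouring of the edges of $G$ with $r$ colours yields a monochromatic copy of $F$ (i.e. a subgraph isomorphic to $F$ all of whose edges have the same colour). The size-Ramsey number $\hat{R}(F,r)$ is the minimum number of edges $|E(G)|$ over all graphs $G$ with $G \to (F)_r$. $\log$ denotes the natural logarithm. *)

theory Defs
  imports Complex_Main
begin

text \<open>A finite simple graph is represented by its edge set: a finite set of
  2-element subsets of the vertex type nat (every finite graph is isomorphic
  to one on natural-number vertices; isolated vertices are irrelevant here).\<close>
definition simple_graph :: "nat set set \<Rightarrow> bool" where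
  "simple_graph E \<longleftrightarrow> finite E \<and> (\<forall>e\<in>E. card e = 2)"

definition mono_path :: "nat set set \<Rightarrow> (nat set \<Rightarrow> nat) \<Rightarrow> nat \<Rightarrow> bool" where
  "mono_path E c n \<longleftrightarrow>
     (\<exists>v :: nat \<Rightarrow> nat. \<exists>col :: nat. inj_on v {..<n} \<and>
        (\<forall>i. Suc i < n \<longrightarrow> {v i, v (Suc i)} \<in> E \<and> c {v i, v (Suc i)} = col))"

definition arrows_path :: "nat set set \<Rightarrow> nat \<Rightarrow> nat \<Rightarrow> bool" where
  "arrows_path E n r \<longleftrightarrow>
     (\<forall>c :: nat set \<Rightarrow> nat. (\<forall>e\<in>E. c e < r) \<longrightarrow> mono_path E c n)"

definition size_ramsey_path :: "nat \<Rightarrow> nat \<Rightarrow> nat" where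
  "size_ramsey_path n r =
     (LEAST m. \<exists>E. simple_graph E \<and> arrows_path E n r \<and> card E = m)"

end

theory Submission
  imports Defs "HOL-Analysis.Complex_Transcendental"
begin



definition path_in :: "nat set set \<Rightarrow> nat list \<Rightarrow> bool" where
  "path_in H u \<longleftrightarrow> distinct u \<and> (\<forall>i. Suc i < length u \<longrightarrow> {u!i, u!Suc i} \<in> H)"

definition dfs_inv :: "nat set set \<Rightarrow> nat set \<Rightarrow> nat set \<Rightarrow> nat list \<Rightarrow> nat set \<Rightarrow> bool" where
  "dfs_inv H V S u T \<longleftrightarrow> S \<inter> set u = {} \<and> S \<inter> T = {} \<and> set u \<inter> T = {} \<and>
     S \<union> set u \<union> T = V \<and> path_in H u \<and> (\<forall>x\<in>S. \<forall>y\<in>T. {x,y} \<notin> H)"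

lemma path_in_snoc:
  assumes "path_in H u" "u \<noteq> []" "y \<notin> set u" "{last u, y} \<in> H"
  shows "path_in H (u @ [y])"
  unfolding path_in_def
proof (intro conjI allI impI)
  show "distinct (u @ [y])" using assms(1,3) by (simp add: path_in_def)
next
  fix i assume i: "Suc i < length (u @ [y])"
  show "{(u @ [y]) ! i, (u @ [y]) ! Suc i} \<in> H"
  proof (cases "Suc i < length u")
    case True then show ?thesis using assms(1) by (simp add: path_in_def nth_append)
  next
    case False
    then have "Suc i = length u" using i by simp
    then have "i = length u - 1" by simp
    then show ?thesis using assms(2,4) by (simp add: nth_append last_conv_nth)
  qed
qed

lemma path_in_butlast:
  assumes "path_in H u" shows "path_in H (butlast u)"
  using assms unfolding path_in_def
  by (auto simp: nth_butlast distinct_butlast)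

lemma dfs:
  assumes "finite V" "dfs_inv H V S u T" "card S \<le> b" "b \<le> card V"
  shows "\<exists>S' u' T'. dfs_inv H V S' u' T' \<and> card S' = b"
  using assms
proof (induction "card T + (card V - card S)" arbitrary: S u T rule: less_induct)
  case less
  note inv = less.prems(2)
  have fin: "finite S" "finite T" "finite (set u)" using inv less.prems(1) unfolding dfs_inv_def
    by (metis finite_Un)+
  show ?case
  proof (cases "card S = b")
    case True then show ?thesis using inv by blast
  next
    case False
    then have Sb: "card S < b" using less.prems(3) by simp
    show ?thesis
    proof (cases "u = []")
      case True
      have "T \<noteq> {}"
      proof
        assume "T = {}"
        then have "S = V" using inv True unfolding dfs_inv_def by auto
        then show False using Sb less.prems(4) by simp
      qed
      then obtain t where t: "t \<in> T" by blast
      have inv2: "dfs_inv H V S [t] (T - {t})"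
        using inv True t unfolding dfs_inv_def path_in_def by auto
      have "card (T - {t}) < card T" by (rule card_Diff1_less[OF fin(2) t])
      then show ?thesis using less.hyps[OF _ less.prems(1) inv2 less.prems(3,4)] by auto
    next
      case False
      define x where "x = last u"
      have xu: "x \<in> set u" using False by (simp add: x_def)
      show ?thesis
      proof (cases "\<exists>y\<in>T. {x,y} \<in> H")
        case True
        then obtain y where y: "y \<in> T" "{x,y} \<in> H" by blast
        have "y \<notin> set u" using inv y unfolding dfs_inv_def by auto
        then have p: "path_in H (u @ [y])" using path_in_snoc[of H u y] inv False y
          unfolding dfs_inv_def x_def by auto
        have inv2: "dfs_inv H V S (u @ [y]) (T - {y})"
          using inv y p unfolding dfs_inv_def by auto
        have "card (T - {y}) < card T" by (rule card_Diff1_less[OF fin(2) y(1)])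
        then show ?thesis using less.hyps[OF _ less.prems(1) inv2 less.prems(3,4)] by auto
      next
        case nT: False
        have dist: "distinct u" using inv unfolding dfs_inv_def path_in_def by simp
        have su: "set u = insert x (set (butlast u))" using False
          by (metis x_def append_butlast_last_id set_append Un_insert_right sup_bot.right_neutral list.set(1) list.set(2) Un_commute insert_is_Un)
        have xnb: "x \<notin> set (butlast u)" using dist False
          by (metis x_def append_butlast_last_id distinct_append disjoint_iff list.set_intros(1))
        have xS: "x \<notin> S" using inv xu unfolding dfs_inv_def by auto
        have inv2: "dfs_inv H V (insert x S) (butlast u) T"
          using inv nT su xnb xS path_in_butlast[of H u] unfolding dfs_inv_def
          by (auto simp: insert_commute)
        have cS: "card (insert x S) = Suc (card S)" using xS fin by simp
        have "card (insert x S) \<le> b" using cS Sb by simp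
        moreover have "card V - card (insert x S) < card V - card S"
          using cS Sb less.prems(4) by simp
        ultimately show ?thesis using less.hyps[OF _ less.prems(1) inv2] less.prems(4) by auto
      qed
    qed
  qed
qed

lemma dfs_sep:
  assumes "finite V" "b \<le> card V" "\<forall>u. path_in H u \<longrightarrow> length u < n"
  shows "\<exists>S U. S \<subseteq> V \<and> U \<subseteq> V \<and> card S = b \<and> card U < n \<and>
           (\<forall>x\<in>S. \<forall>y\<in>V. {x,y} \<in> H \<longrightarrow> y \<in> S \<union> U)"
proof -
  have i0: "dfs_inv H V {} [] V" unfolding dfs_inv_def path_in_def by simp
  obtain S u T where inv: "dfs_inv H V S u T" and cS: "card S = b"
    using dfs[OF assms(1) i0 _ assms(2)] by auto
  have p: "path_in H u" using inv unfolding dfs_inv_def by blast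
  have "length u < n" using assms(3) p by blast
  moreover have "card (set u) \<le> length u" by (rule card_length)
  ultimately have cu: "card (set u) < n" by linarith
  have sv: "S \<subseteq> V" "set u \<subseteq> V" using inv unfolding dfs_inv_def by blast+
  have sep: "\<forall>x\<in>S. \<forall>y\<in>V. {x,y} \<in> H \<longrightarrow> y \<in> S \<union> set u"
  proof (intro ballI impI)
    fix x y assume xy: "x \<in> S" "y \<in> V" "{x,y} \<in> H"
    have "y \<notin> T" using inv xy(1,3) unfolding dfs_inv_def by blast
    moreover have "V = S \<union> set u \<union> T" using inv unfolding dfs_inv_def by blast
    ultimately show "y \<in> S \<union> set u" using xy(2) by blast
  qed
  show ?thesis using sv cS cu sep by blast
qed

lemma edge_bound:
  assumes "finite W" "finite G" "\<forall>e\<in>H. card e = 2" "H \<subseteq> G" "b \<ge> 1"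
    "\<forall>u. path_in H u \<longrightarrow> length u < n"
    "\<forall>Y. Y \<subseteq> W \<longrightarrow> card Y < b + n \<longrightarrow> card {e\<in>G. e \<subseteq> Y} \<le> D"
  shows "V \<subseteq> W \<Longrightarrow> card {e\<in>H. e \<subseteq> V} \<le> (card V div b + 1) * D"
proof (induction "card V" arbitrary: V rule: less_induct)
  case less
  have finV: "finite V" using less.prems assms(1) finite_subset by blast
  have finH: "finite H" using assms(2,4) finite_subset by blast
  show ?case
  proof (cases "card V < b")
    case True
    have "card {e\<in>H. e \<subseteq> V} \<le> card {e\<in>G. e \<subseteq> V}"
      using assms(2,4) by (intro card_mono) auto
    also have "\<dots> \<le> D" using assms(7)[rule_format, OF less.prems] True by simp
    finally show ?thesis by simp
  next
    case False
    then have bV: "b \<le> card V" by simp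
    obtain S U where SU: "S \<subseteq> V" "U \<subseteq> V" "card S = b" "card U < n"
      "\<forall>x\<in>S. \<forall>y\<in>V. {x,y} \<in> H \<longrightarrow> y \<in> S \<union> U"
      using dfs_sep[OF finV bV assms(6)] by blast
    have sub: "{e\<in>H. e \<subseteq> V} \<subseteq> {e\<in>H. e \<subseteq> V - S} \<union> {e\<in>G. e \<subseteq> S \<union> U}"
    proof
      fix e assume e: "e \<in> {e\<in>H. e \<subseteq> V}"
      show "e \<in> {e\<in>H. e \<subseteq> V - S} \<union> {e\<in>G. e \<subseteq> S \<union> U}"
      proof (cases "e \<subseteq> V - S")
        case True then show ?thesis using e by blast
      next
        case False
        then obtain x where x: "x \<in> e" "x \<in> S" using e by blast
        have e2: "card e = 2" using e assms(3) by blast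
        obtain p q where pq: "e = {p,q}" "p \<noteq> q" using e2 card_2_iff by metis
        obtain y where ey: "e = {x,y}" using pq x(1) by (metis insert_commute insertE singletonD)
        have eH: "{x,y} \<in> H" using e ey by simp
        have "y \<in> V" using e ey by simp
        then have "y \<in> S \<union> U" using SU(5) x(2) eH by blast
        then have "e \<subseteq> S \<union> U" using ey x(2) by simp
        moreover have "e \<in> G" using e assms(4) by blast
        ultimately show ?thesis by blast
      qed
    qed
    have finS: "finite S" "finite U" using SU finV finite_subset by blast+
    have "card (S \<union> U) \<le> card S + card U" by (rule card_Un_le)
    then have cSU: "card (S \<union> U) < b + n" using SU by simp
    have c1: "card {e\<in>G. e \<subseteq> S \<union> U} \<le> D"
      using assms(7)[rule_format, OF _ cSU] SU(1,2) less.prems by blast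
    have cVS: "card (V - S) = card V - b" using SU finS finV by (simp add: card_Diff_subset)
    have "card (V - S) < card V" using cVS bV assms(5) by simp
    then have c2: "card {e\<in>H. e \<subseteq> V - S} \<le> (card (V - S) div b + 1) * D"
      using less.hyps[of "V - S"] less.prems by blast
    have dv: "card (V - S) div b + 1 = card V div b"
      using cVS bV assms(5) le_div_geq[of b "card V"] by simp
    have "card {e\<in>H. e \<subseteq> V} \<le> card ({e\<in>H. e \<subseteq> V - S} \<union> {e\<in>G. e \<subseteq> S \<union> U})"
      using sub finH assms(2) by (intro card_mono) auto
    also have "\<dots> \<le> card {e\<in>H. e \<subseteq> V - S} + card {e\<in>G. e \<subseteq> S \<union> U}" by (rule card_Un_le)
    also have "\<dots> \<le> (card V div b) * D + D"
    proof -
      have "card V div b * D = (card (V - S) div b + 1) * D" using dv by simp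
      then show ?thesis using c1 c2 by linarith
    qed
    finally show ?thesis by simp
  qed
qed




lemma binom_ratio:
  fixes K M t :: nat
  shows "t \<le> M \<Longrightarrow> M \<le> K \<Longrightarrow> real ((K - t) choose (M - t)) \<le> (real M / real K)^t * real (K choose M)"
proof (induction t)
  case 0 show ?case by simp
next
  case (Suc t)
  define K' where "K' = K - t"
  define M' where "M' = M - t"
  have M'pos: "0 < M'" using Suc.prems by (simp add: M'_def)
  have KM': "M' \<le> K'" using Suc.prems by (simp add: M'_def K'_def)
  have eq: "M' * (K' choose M') = K' * ((K' - 1) choose (M' - 1))"
    by (rule times_binomial_minus1_eq[OF M'pos])
  have K'pos: "0 < K'" using M'pos KM' by simp
  have e2: "K - Suc t = K' - 1" "M - Suc t = M' - 1" by (simp_all add: K'_def M'_def)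
  have eqr: "real M' * real (K' choose M') = real K' * real ((K' - 1) choose (M' - 1))"
    using arg_cong[OF eq, of real] by simp
  have "real ((K' - 1) choose (M' - 1)) = real M' / real K' * real (K' choose M')"
    using eqr K'pos by (simp add: field_simps)
  also have "\<dots> \<le> real M / real K * real (K' choose M')"
  proof (rule mult_right_mono)
    have "real M' * real K \<le> real M * real K'"
    proof -
      have mt: "t * M \<le> t * K" using Suc.prems by simp
      have "M' * K = M * K - t * K" unfolding M'_def by (simp add: diff_mult_distrib)
      moreover have "M * K' = M * K - t * M" unfolding K'_def by (simp add: diff_mult_distrib2 mult.commute)
      ultimately have "M' * K \<le> M * K'" using mt by (simp add: diff_le_mono2)
      then show ?thesis by (metis of_nat_le_iff of_nat_mult)
    qed
    then show "real M' / real K' \<le> real M / real K"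
      using K'pos Suc.prems by (simp add: divide_simps)
  qed simp
  also have "\<dots> \<le> real M / real K * ((real M / real K)^t * real (K choose M))"
    using Suc.IH Suc.prems unfolding K'_def M'_def by (intro mult_left_mono) simp_all
  finally show ?case using e2 by (simp add: mult.assoc)
qed

lemma card_supsets:
  assumes "finite P" "F \<subseteq> P" "card F = t"
  shows "card {E. E \<subseteq> P \<and> card E = M \<and> F \<subseteq> E} \<le> (card P - t) choose (M - t)"
proof -
  have "card {E. E \<subseteq> P \<and> card E = M \<and> F \<subseteq> E} \<le> card {E'. E' \<subseteq> P - F \<and> card E' = M - t}"
  proof (rule card_inj_on_le[where f = "\<lambda>E. E - F"])
    show "inj_on (\<lambda>E. E - F) {E. E \<subseteq> P \<and> card E = M \<and> F \<subseteq> E}"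
      by (rule inj_onI) auto
    show "(\<lambda>E. E - F) ` {E. E \<subseteq> P \<and> card E = M \<and> F \<subseteq> E} \<subseteq> {E'. E' \<subseteq> P - F \<and> card E' = M - t}"
    proof
      fix E' assume "E' \<in> (\<lambda>E. E - F) ` {E. E \<subseteq> P \<and> card E = M \<and> F \<subseteq> E}"
      then obtain E where E: "E \<subseteq> P" "card E = M" "F \<subseteq> E" "E' = E - F" by blast
      have "finite E" using E(1) assms(1) finite_subset by blast
      then have "card E' = M - t" using E assms(3) by (simp add: card_Diff_subset finite_subset)
      then show "E' \<in> {E'. E' \<subseteq> P - F \<and> card E' = M - t}" using E by blast
    qed
    show "finite {E'. E' \<subseteq> P - F \<and> card E' = M - t}" using assms(1) by simp
  qed
  also have "\<dots> = card (P - F) choose (M - t)" using assms(1) by (simp add: n_subsets)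
  also have "card (P - F) = card P - t" using assms by (simp add: card_Diff_subset finite_subset)
  finally show ?thesis .
qed

lemma sparse_exists:
  fixes N a t M :: nat
  assumes "a \<le> N" "t \<le> M"
    "(N choose a) * ((a choose 2) choose t) * (((N choose 2) - t) choose (M - t)) < (N choose 2) choose M"
  shows "\<exists>E. E \<subseteq> {e. e \<subseteq> {..<N} \<and> card e = 2} \<and> card E = M \<and>
     (\<forall>Y. Y \<subseteq> {..<N} \<longrightarrow> card Y \<le> a \<longrightarrow> card {e\<in>E. e \<subseteq> Y} < t)"
proof (rule ccontr)
  define P where "P = {e. e \<subseteq> {..<N} \<and> card e = (2::nat)}"
  define \<Omega> where "\<Omega> = {E. E \<subseteq> P \<and> card E = M}"
  define Ys where "Ys = {Y. Y \<subseteq> {..<N} \<and> card Y = a}"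
  define PY where "PY Y = {e. e \<subseteq> Y \<and> card e = (2::nat)}" for Y :: "nat set"
  define Fs where "Fs Y = {F. F \<subseteq> PY Y \<and> card F = t}" for Y
  define Bad where "Bad F = {E. E \<subseteq> P \<and> card E = M \<and> F \<subseteq> E}" for F
  assume neg: "\<not> ?thesis"
  have "P \<subseteq> Pow {..<N}" unfolding P_def by blast
  then have finP: "finite P" by (rule finite_subset) simp
  have cP: "card P = N choose 2" unfolding P_def using n_subsets[of "{..<N}" 2] by simp
  have "Ys \<subseteq> Pow {..<N}" unfolding Ys_def by blast
  then have finYs: "finite Ys" by (rule finite_subset) simp
  have finPY: "finite (PY Y)" if "finite Y" for Y
  proof -
    have "PY Y \<subseteq> Pow Y" unfolding PY_def by blast
    then show ?thesis using that by (meson finite_Pow_iff finite_subset)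
  qed
  have finFs: "finite (Fs Y)" if "finite Y" for Y
  proof -
    have "Fs Y \<subseteq> Pow (PY Y)" unfolding Fs_def by blast
    then show ?thesis using finPY[OF that] by (meson finite_Pow_iff finite_subset)
  qed
  have cov: "\<Omega> \<subseteq> (\<Union>Y\<in>Ys. \<Union>F\<in>Fs Y. Bad F)"
  proof
    fix E assume E: "E \<in> \<Omega>"
    then have EP: "E \<subseteq> P" "card E = M" unfolding \<Omega>_def by auto
    have "\<not> (\<forall>Y. Y \<subseteq> {..<N} \<longrightarrow> card Y \<le> a \<longrightarrow> card {e\<in>E. e \<subseteq> Y} < t)"
    proof
      assume h: "\<forall>Y. Y \<subseteq> {..<N} \<longrightarrow> card Y \<le> a \<longrightarrow> card {e\<in>E. e \<subseteq> Y} < t"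
      have "E \<subseteq> {e. e \<subseteq> {..<N} \<and> card e = 2}" using EP(1) unfolding P_def .
      then have "\<exists>E. E \<subseteq> {e. e \<subseteq> {..<N} \<and> card e = 2} \<and> card E = M \<and>
         (\<forall>Y. Y \<subseteq> {..<N} \<longrightarrow> card Y \<le> a \<longrightarrow> card {e\<in>E. e \<subseteq> Y} < t)"
        using EP(2) h by (intro exI[of _ E] conjI)
      then show False by (rule notE[OF neg])
    qed
    then obtain Y0 where Y0: "Y0 \<subseteq> {..<N}" "card Y0 \<le> a" "\<not> card {e\<in>E. e \<subseteq> Y0} < t"
      by blast
    obtain Y where Y: "Y0 \<subseteq> Y" "Y \<subseteq> {..<N}" "card Y = a"
      using exists_subset_between[OF Y0(2) _ Y0(1)] assms(1) by auto
    have "t \<le> card {e\<in>E. e \<subseteq> Y0}" using Y0(3) by simp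
    then obtain F where F: "F \<subseteq> {e\<in>E. e \<subseteq> Y0}" "card F = t"
      by (meson obtain_subset_with_card_n)
    have "F \<subseteq> PY Y" using F(1) EP(1) Y(1) unfolding PY_def P_def by auto
    then have "F \<in> Fs Y" using F(2) unfolding Fs_def by simp
    moreover have "Y \<in> Ys" using Y unfolding Ys_def by simp
    moreover have "E \<in> Bad F" using EP F(1) unfolding Bad_def by auto
    ultimately show "E \<in> (\<Union>Y\<in>Ys. \<Union>F\<in>Fs Y. Bad F)" by blast
  qed
  define C where "C = ((N choose 2) - t) choose (M - t)"
  have cBad: "card (Bad F) \<le> C" if "F \<in> Fs Y" "Y \<in> Ys" for F Y
  proof -
    have "F \<subseteq> P" using that unfolding Fs_def PY_def P_def Ys_def by auto
    then show ?thesis unfolding Bad_def C_def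
      using card_supsets[OF finP _ , of F t M] that cP unfolding Fs_def by simp
  qed
  have cFs: "card (Fs Y) = (a choose 2) choose t" if "Y \<in> Ys" for Y
  proof -
    have fY: "finite Y" "card Y = a" using that unfolding Ys_def by (auto dest: finite_subset[OF _ finite_lessThan])
    have "card (PY Y) = a choose 2" unfolding PY_def using n_subsets[OF fY(1), of 2] fY by simp
    then show ?thesis unfolding Fs_def using n_subsets[OF finPY[OF fY(1)], of t] by simp
  qed
  have cYs: "card Ys = N choose a" unfolding Ys_def using n_subsets[of "{..<N}" a] by simp
  have "card \<Omega> \<le> card (\<Union>Y\<in>Ys. \<Union>F\<in>Fs Y. Bad F)"
  proof (rule card_mono[OF _ cov])
    have "(\<Union>Y\<in>Ys. \<Union>F\<in>Fs Y. Bad F) \<subseteq> Pow P" unfolding Bad_def by blast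
    then show "finite (\<Union>Y\<in>Ys. \<Union>F\<in>Fs Y. Bad F)" using finP by (meson finite_Pow_iff finite_subset)
  qed
  also have "\<dots> \<le> (\<Sum>Y\<in>Ys. card (\<Union>F\<in>Fs Y. Bad F))" by (rule card_UN_le[OF finYs])
  also have "\<dots> \<le> (\<Sum>Y\<in>Ys. \<Sum>F\<in>Fs Y. card (Bad F))"
  proof (rule sum_mono)
    fix Y assume "Y \<in> Ys"
    then have "finite Y" unfolding Ys_def by (auto dest: finite_subset[OF _ finite_lessThan])
    then show "card (\<Union>F\<in>Fs Y. Bad F) \<le> (\<Sum>F\<in>Fs Y. card (Bad F))" by (intro card_UN_le finFs)
  qed
  also have "\<dots> \<le> (\<Sum>Y\<in>Ys. \<Sum>F\<in>Fs Y. C)"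
    by (intro sum_mono cBad) auto
  also have "\<dots> = (\<Sum>Y\<in>Ys. ((a choose 2) choose t) * C)"
    by (intro sum.cong refl) (simp add: cFs)
  also have "\<dots> = (N choose a) * ((a choose 2) choose t) * C" using cYs by simp
  also have "\<dots> < (N choose 2) choose M" using assms(3) unfolding C_def .
  finally have "card \<Omega> < (N choose 2) choose M" .
  moreover have "card \<Omega> = (N choose 2) choose M" unfolding \<Omega>_def using n_subsets[OF finP, of M] cP by simp
  ultimately show False by simp
qed




lemma pow_le_exp_fact: "real k ^ k \<le> exp (real k) * fact k"
proof (induction k)
  case 0 then show ?case by simp
next
  case (Suc k)
  show ?case
  proof (cases "k = 0")
    case True then show ?thesis by simp
  next
    case False
    then have kp: "real k > 0" by simp
    have h1: "1 + 1 / real k \<le> exp (1 / real k)" by (rule exp_ge_add_one_self)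
    have "(1 + 1 / real k) ^ k \<le> exp (1 / real k) ^ k"
      by (rule power_mono[OF h1]) (use kp in simp)
    also have "\<dots> = exp 1" using kp by (simp add: exp_of_nat_mult[symmetric])
    finally have e1: "(1 + 1 / real k) ^ k \<le> exp 1" .
    have kk: "real k * (1 + 1 / real k) = real (Suc k)" using kp by (simp add: field_simps)
    have "real (Suc k) ^ Suc k = real (Suc k) * (real k * (1 + 1 / real k)) ^ k"
      unfolding kk by simp
    also have "\<dots> = real (Suc k) * real k ^ k * (1 + 1 / real k) ^ k"
      by (simp add: power_mult_distrib)
    also have "\<dots> \<le> real (Suc k) * (exp (real k) * fact k) * exp 1"
      by (intro mult_mono e1 mult_left_mono Suc.IH) auto
    also have "\<dots> = exp (real (Suc k)) * fact (Suc k)"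
      by (simp add: exp_add[symmetric] algebra_simps)
    finally show ?thesis .
  qed
qed

lemma binom_exp_bound:
  assumes "k > 0"
  shows "real (m choose k) \<le> exp (real k) * (real m / real k) ^ k"
proof -
  have "real (m choose k) * fact k \<le> real m ^ k"
    using binomial_fact_pow[of m k] by (metis of_nat_fact of_nat_le_iff of_nat_mult of_nat_power)
  then have "real (m choose k) \<le> real m ^ k / fact k" by (simp add: field_simps)
  also have "\<dots> \<le> real m ^ k * exp (real k) / real k ^ k"
  proof -
    have kk: "real k ^ k > 0" using assms by simp
    have g: "1 \<le> exp (real k) * fact k / real k ^ k" using pow_le_exp_fact[of k] kk by simp
    have "real m ^ k / fact k = real m ^ k / fact k * 1" by simp
    also have "\<dots> \<le> real m ^ k / fact k * (exp (real k) * fact k / real k ^ k)"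
      by (rule mult_left_mono[OF g]) simp
    also have "\<dots> = real m ^ k * exp (real k) / real k ^ k" by simp
    finally show ?thesis .
  qed
  also have "\<dots> = exp (real k) * (real m / real k) ^ k" by (simp add: power_divide)
  finally show ?thesis .
qed

lemma ln_83: "ln (8/3::real) \<ge> 0.95"
proof -
  have "exp (0.95::real) * exp 0.05 = exp 1" by (simp add: exp_add[symmetric])
  moreover have "exp (0.05::real) \<ge> 1.05" using exp_ge_add_one_self[of "0.05::real"] by simp
  moreover have "exp (1::real) < 2.72" using e_less_272 by simp
  ultimately have "exp (0.95::real) * 1.05 < 2.72"
    by (smt (verit) exp_gt_zero mult_left_mono)
  then have "exp (0.95::real) \<le> 8/3" by simp
  then have "ln (exp 0.95) \<le> ln (8/3::real)" by (subst ln_le_cancel_iff) auto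
  then show ?thesis by simp
qed

lemma ln_15: "ln (15::real) \<le> 3"
proof -
  have "(9/8::real) ^ 24 \<le> exp (1/8) ^ 24"
    by (intro power_mono) (use exp_ge_add_one_self[of "1/8::real"] in simp_all)
  also have "\<dots> = exp 3" by (simp add: exp_of_nat_mult[symmetric])
  finally have "15 \<le> exp (3::real)" by (rule order_trans[rotated]) (simp add: power_divide)
  then have "ln 15 \<le> ln (exp (3::real))" by (subst ln_le_cancel_iff) auto
  then show ?thesis by simp
qed

lemma ln_2: "ln (2::real) \<ge> 1/2"
proof -
  have "exp (1/2::real) ^ 2 = exp 1" by (simp add: exp_of_nat_mult[symmetric])
  also have "\<dots> < 2 ^ 2" using e_less_272 by simp
  finally have "exp (1/2::real) < 2" by (rule power_less_imp_less_base) simp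
  then have "ln (exp (1/2)) \<le> ln (2::real)" by (subst ln_le_cancel_iff) auto
  then show ?thesis by simp
qed




lemma real_choose2: "real (m choose 2) = real m * (real m - 1) / 2"
proof (cases m)
  case 0 then show ?thesis by simp
next
  case (Suc k)
  have "m choose 2 = m * k div 2" using Suc by (simp add: choose_two)
  moreover have "even (m * k)" using Suc by simp
  ultimately have "2 * (m choose 2) = m * k" by simp
  then have "2 * real (m choose 2) = real m * real k" by (metis of_nat_mult of_nat_numeral)
  then show ?thesis using Suc by (simp add: field_simps)
qed

lemma main_count:
  fixes r n :: nat
  assumes r: "r \<ge> 2" and n: "n \<ge> 1"
    and lam_def: "lam = 2 * ln (15 * exp 1 * real r) / ln (8/3)"
    and D_def: "D = nat \<lceil>lam * real n\<rceil>"
    and t_def: "t = D + 1" and M_def: "M = r*(30*r+1)*D + 1" and N_def: "N = 30*r*n"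
    and MK: "M \<le> N choose 2"
  shows "(N choose (2*n)) * (((2*n) choose 2) choose t) * (((N choose 2) - t) choose (M - t))
          < (N choose 2) choose M"
proof -
  define K where "K = N choose 2"
  define A2 where "A2 = (2*n) choose 2"
  define X where "X = real (K choose M)"
  define q where "q = 15 * exp 1 * real r"
  have R: "real r \<ge> 2" using r by simp
  have Rn: "real n \<ge> 1" using n by simp
  have Xpos: "X > 0" using MK unfolding X_def K_def by simp
  have tM: "t \<le> M" unfolding t_def M_def using r by simp
  have tpos: "t > 0" unfolding t_def by simp
  have realN: "real N = 30 * real r * real n" unfolding N_def by simp
  have realK: "real K = real N * (real N - 1) / 2" unfolding K_def by (rule real_choose2)
  have realA2: "real A2 = real n * (2 * real n - 1)" unfolding A2_def
    by (simp add: real_choose2 field_simps)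
  have rn: "real r * real n \<ge> 2" using mult_mono[OF R Rn] by simp
  have N60: "real N \<ge> 60" unfolding realN using rn by (simp add: mult.assoc mult.commute)
  have Kpos: "real K > 0" unfolding realK using N60 by simp
  have q1: "q > 1" unfolding q_def using R by (smt (verit) exp_gt_one mult_le_cancel_left1 zero_less_one)
  have lam_pos: "lam \<ge> 0" unfolding lam_def using q1 ln_83 unfolding q_def by simp
  have tlam: "real t > lam * real n"
  proof -
    have "real D \<ge> lam * real n" unfolding D_def using lam_pos by linarith
    then show ?thesis unfolding t_def by simp
  qed
  have R1: "real ((K - t) choose (M - t)) \<le> (real M / real K) ^ t * X"
    unfolding X_def using binom_ratio[OF tM MK[folded K_def]] .
  have B1: "real (N choose (2*n)) \<le> q ^ (2*n)"
  proof -
    have "real (N choose (2*n)) \<le> exp (real (2*n)) * (real N / real (2*n)) ^ (2*n)"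
      by (rule binom_exp_bound) (use n in simp)
    also have "real N / real (2*n) = 15 * real r" unfolding realN using Rn by (simp add: field_simps)
    also have "exp (real (2*n)) = exp 1 ^ (2*n)" by (simp add: exp_of_nat_mult[symmetric])
    finally show ?thesis unfolding q_def by (simp add: power_mult_distrib mult_ac)
  qed
  have B2: "real (A2 choose t) \<le> exp (real t) * (real A2 / real t) ^ t"
    by (rule binom_exp_bound[OF tpos])
  have key: "exp 1 * real A2 * real M \<le> 3/8 * real t * real K"
  proof -
    have M1: "real M \<le> real r * (30 * real r + 1) * real t"
    proof -
      have "M \<le> r*(30*r+1)*t" unfolding M_def t_def using r by simp
      then have "real M \<le> real (r*(30*r+1)*t)" by (simp only: of_nat_le_iff)
      then show ?thesis by (simp add: algebra_simps)
    qed
    have ineq: "2.72 * (2 * real n - 1) * (30 * real r + 1) \<le> 45/8 * (30 * real r * real n - 1)"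
    proof -
      have h: "real r * real n \<ge> 2 * real n" using R Rn by (simp add: mult_right_mono)
      have e1: "2.72 * (2 * real n - 1) * (30 * real r + 1) = 816/5 * (real r * real n) + 136/25 * real n - 408/5 * real r - 68/25"
        by (simp add: field_simps)
      have e2: "45/8 * (30 * real r * real n - 1) = 675/4 * (real r * real n) - 45/8"
        by (simp add: field_simps)
      show ?thesis unfolding e1 e2 using h R Rn by linarith
    qed
    have e: "exp 1 \<le> (2.72::real)" using e_less_272 by simp
    have A2nn: "real A2 \<ge> 0" by simp
    have "exp 1 * real A2 * real M \<le> exp 1 * real A2 * (real r * (30 * real r + 1) * real t)"
      by (intro mult_left_mono M1) simp_all
    also have "\<dots> \<le> 2.72 * real A2 * (real r * (30 * real r + 1) * real t)"
      by (intro mult_right_mono e) (use A2nn in simp_all)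
    also have "\<dots> = (real n * real r * real t) * (2.72 * (2 * real n - 1) * (30 * real r + 1))"
      unfolding realA2 by (simp add: algebra_simps)
    also have "\<dots> \<le> (real n * real r * real t) * (45/8 * (30 * real r * real n - 1))"
      by (intro mult_left_mono ineq) simp
    also have "\<dots> = 3/8 * real t * real K" unfolding realK realN by (simp add: algebra_simps)
    finally show ?thesis .
  qed
  have Y: "exp (real t) * (real A2 / real t) ^ t * (real M / real K) ^ t \<le> (3/8) ^ t"
  proof -
    have "exp (real t) * (real A2 / real t) ^ t * (real M / real K) ^ t
          = (exp 1 * real A2 * real M / (real t * real K)) ^ t"
      by (simp add: exp_of_nat_mult[symmetric] power_mult_distrib power_divide)
    also have "\<dots> \<le> (3/8) ^ t"
    proof (rule power_mono)
      show "exp 1 * real A2 * real M / (real t * real K) \<le> 3/8"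
        using key tpos Kpos by (simp add: divide_simps)
    qed simp
    finally show ?thesis .
  qed
  have W: "q ^ (2*n) * (3/8) ^ t < 1"
  proof -
    have lq: "2 * real n * ln q = lam * real n * ln (8/3)" unfolding lam_def q_def
      using ln_83 by (simp add: field_simps)
    have "lam * real n * ln (8/3) < real t * ln (8/3)"
      using tlam ln_83 by (intro mult_strict_right_mono) simp_all
    then have lt: "2 * real n * ln q - real t * ln (8/3) < 0" using lq by linarith
    have "q ^ (2*n) * (3/8) ^ t = exp (2 * real n * ln q - real t * ln (8/3))"
    proof -
      have "q ^ (2*n) = exp (ln q) ^ (2*n)" using q1 by simp
      also have "\<dots> = exp (real (2*n) * ln q)" by (rule exp_of_nat_mult[symmetric])
      finally have "q ^ (2*n) = exp (2 * real n * ln q)" by simp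
      moreover have "(3/8::real) ^ t = exp (- (real t * ln (8/3)))"
      proof -
        have "(8/3::real) ^ t = exp (ln (8/3)) ^ t" by simp
        also have "\<dots> = exp (real t * ln (8/3))" by (rule exp_of_nat_mult[symmetric])
        finally have "(8/3::real) ^ t = exp (real t * ln (8/3))" .
        have "(3/8::real) ^ t = inverse ((8/3) ^ t)" by (simp add: power_inverse[symmetric])
        then show ?thesis unfolding exp_minus by (metis \<open>(8/3::real) ^ t = exp (real t * ln (8/3))\<close>)
      qed
      ultimately show ?thesis by (simp add: exp_diff exp_minus field_simps)
    qed
    then show ?thesis using lt by simp
  qed
  have "real ((N choose (2*n)) * (A2 choose t) * ((K - t) choose (M - t)))
      = real (N choose (2*n)) * real (A2 choose t) * real ((K - t) choose (M - t))" by simp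
  also have "\<dots> \<le> q ^ (2*n) * (exp (real t) * (real A2 / real t) ^ t) * ((real M / real K) ^ t * X)"
    by (intro mult_mono B1 B2 R1) (simp_all add: Xpos less_imp_le)
  also have "\<dots> = q ^ (2*n) * (exp (real t) * (real A2 / real t) ^ t * (real M / real K) ^ t) * X"
    by (simp add: mult.assoc)
  also have "\<dots> \<le> q ^ (2*n) * (3/8) ^ t * X"
    by (intro mult_right_mono mult_left_mono Y) (use Xpos q1 in simp_all)
  also have "\<dots> < X" using W Xpos by simp
  finally show ?thesis unfolding X_def K_def A2_def by linarith
qed




lemma lam_bound:
  fixes r :: nat
  assumes r: "r \<ge> 2"
    and lam_def: "lam = 2 * ln (15 * exp 1 * real r) / ln (8/3)"
  shows "real r * (30 * real r + 1) * lam \<le> 600 * ln (real r) * (real r)^2 - 10 * (real r)^2"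
proof -
  define L where "L = ln (real r)"
  have R: "real r \<ge> 2" using r by simp
  have L2: "L \<ge> 1/2" unfolding L_def using ln_2 R by (smt (verit) ln_le_cancel_iff)
  have lq: "ln (15 * exp 1 * real r) = ln 15 + 1 + L" unfolding L_def using R
    by (simp add: ln_mult)
  have lq4: "ln (15 * exp 1 * real r) \<le> 4 + L" using lq ln_15 by simp
  have lqpos: "ln (15 * exp 1 * real r) \<ge> 0" using lq L2 by simp
  have l83: "ln (8/3::real) \<ge> 0.95" by (rule ln_83)
  have lam1: "lam \<le> 2 * (4 + L) / 0.95"
  proof -
    have "lam = 2 * ln (15 * exp 1 * real r) / ln (8/3)" by (rule lam_def)
    also have "\<dots> \<le> 2 * ln (15 * exp 1 * real r) / 0.95"
      using l83 lqpos by (intro divide_left_mono) simp_all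
    also have "\<dots> \<le> 2 * (4 + L) / 0.95" using lq4 by simp
    finally show ?thesis .
  qed
  have lam0: "lam \<ge> 0" unfolding lam_def using lqpos l83 by simp
  have c1: "real r * (30 * real r + 1) \<le> 30.5 * (real r)^2"
    using R by (simp add: power2_eq_square algebra_simps)
  have "real r * (30 * real r + 1) * lam \<le> 30.5 * (real r)^2 * lam"
    using c1 lam0 by (rule mult_right_mono)
  also have "\<dots> \<le> 30.5 * (real r)^2 * (2 * (4 + L) / 0.95)"
    using lam1 by (intro mult_left_mono) simp_all
  also have "\<dots> \<le> (real r)^2 * (600 * L - 10)"
  proof -
    have h: "30.5 * (2 * (4 + L) / 0.95) \<le> 600 * L - 10" using L2 by (simp add: field_simps)
    have eq: "30.5 * (real r)^2 * (2 * (4 + L) / 0.95) = (real r)^2 * (30.5 * (2 * (4 + L) / 0.95))"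
      by (simp only: mult_ac)
    show ?thesis unfolding eq by (rule mult_left_mono[OF h]) simp
  qed
  finally show ?thesis unfolding L_def by (simp add: algebra_simps)
qed

lemma arrows_from_sparse:
  fixes G :: "nat set set"
  assumes G: "G \<subseteq> {e. e \<subseteq> {..<NN} \<and> card e = 2}" "finite G"
    and sp: "\<forall>Y. Y \<subseteq> {..<NN} \<longrightarrow> card Y \<le> 2*n \<longrightarrow> card {e\<in>G. e \<subseteq> Y} < D + 1"
    and n: "n \<ge> 1" and big: "card G > r * ((NN div n + 1) * D)"
  shows "arrows_path G n r"
  unfolding arrows_path_def
proof (intro allI impI)
  fix c :: "nat set \<Rightarrow> nat"
  assume c: "\<forall>e\<in>G. c e < r"
  show "mono_path G c n"
  proof (rule ccontr)
    assume nm: "\<not> mono_path G c n"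
    define H where "H i = {e\<in>G. c e = i}" for i
    have bound: "card (H i) \<le> (NN div n + 1) * D" for i
    proof -
      have np: "\<forall>u. path_in (H i) u \<longrightarrow> length u < n"
      proof (intro allI impI)
        fix u assume u: "path_in (H i) u"
        show "length u < n"
        proof (rule ccontr)
          assume "\<not> length u < n"
          then have len: "n \<le> length u" by simp
          have "inj_on (nth u) {..<n}" using u len unfolding path_in_def
            by (intro inj_on_nth) auto
          moreover have "\<forall>j. Suc j < n \<longrightarrow> {u!j, u!Suc j} \<in> G \<and> c {u!j, u!Suc j} = i"
            using u len unfolding path_in_def H_def by auto
          ultimately have "mono_path G c n" unfolding mono_path_def by blast
          then show False using nm by simp
        qed
      qed
      have eb: "card {e\<in>H i. e \<subseteq> {..<NN}} \<le> (card {..<NN} div n + 1) * D"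
      proof (rule edge_bound[where W="{..<NN}" and G=G and n=n])
        show "\<forall>e\<in>H i. card e = 2" using G(1) unfolding H_def by blast
        show "H i \<subseteq> G" unfolding H_def by blast
        show "\<forall>Y. Y \<subseteq> {..<NN} \<longrightarrow> card Y < n + n \<longrightarrow> card {e\<in>G. e \<subseteq> Y} \<le> D"
        proof (intro allI impI)
          fix Y assume Y: "Y \<subseteq> {..<NN}" "card Y < n + n"
          then have "card Y \<le> 2*n" by simp
          then have "card {e\<in>G. e \<subseteq> Y} < D + 1" using sp Y(1) by blast
          then show "card {e\<in>G. e \<subseteq> Y} \<le> D" by simp
        qed
        show "finite {..<NN}" by simp
        show "finite G" by (rule G(2))
        show "n \<ge> 1" by (rule n)
        show "\<forall>u. path_in (H i) u \<longrightarrow> length u < n" by (rule np)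
        show "{..<NN} \<subseteq> {..<NN}" by simp
      qed
      have "{e\<in>H i. e \<subseteq> {..<NN}} = H i" using G(1) unfolding H_def by blast
      then show ?thesis using eb by simp
    qed
    have "G = (\<Union>i\<in>{..<r}. H i)" using c unfolding H_def by auto
    then have "card G \<le> (\<Sum>i\<in>{..<r}. card (H i))" using card_UN_le[of "{..<r}" H] by simp
    also have "\<dots> \<le> r * ((NN div n + 1) * D)"
      using sum_bounded_above[of "{..<r}" "\<lambda>i. card (H i)" "(NN div n + 1) * D"] bound by simp
    finally show False using big by simp
  qed
qed




theorem theorem1p2:
  fixes r :: nat
  assumes "r \<ge> 2"
  shows "\<exists>N::nat. \<forall>n\<ge>N.
           real (size_ramsey_path n r) < 600 * ln (real r) * (real r)^2 * real n"
proof -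
  define lam where "lam = 2 * ln (15 * exp 1 * real r) / ln (8/3)"
  have R: "real r \<ge> 2" using assms by simp
  have lamb: "real r * (30 * real r + 1) * lam \<le> 600 * ln (real r) * (real r)^2 - 10 * (real r)^2"
    by (rule lam_bound[OF assms lam_def])
  have lam0: "lam \<ge> 0"
  proof -
    have "15 * exp 1 * real r \<ge> 1" using R by (smt (verit) exp_ge_add_one_self mult_le_cancel_left1)
    then show ?thesis unfolding lam_def using ln_83 by simp
  qed
  show ?thesis
  proof (intro exI[of _ "max 4 (2*r)"] allI impI)
    fix n :: nat assume nN: "max 4 (2*r) \<le> n"
    have n4: "n \<ge> 4" and n2r: "n \<ge> 2*r" using nN by auto
    have Rn: "real n \<ge> 4" using n4 by simp
    define D where "D = nat \<lceil>lam * real n\<rceil>"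
    define t where "t = D + 1"
    define M where "M = r*(30*r+1)*D + 1"
    define NN where "NN = 30*r*n"
    define L where "L = ln (real r)"
    have x0: "lam * real n \<ge> 0" using lam0 by simp
    have Dle: "real D \<le> lam * real n + 1"
    proof -
      have "real D = real_of_int \<lceil>lam * real n\<rceil>" unfolding D_def using x0 by simp
      moreover have "real_of_int \<lceil>lam * real n\<rceil> < lam * real n + 1" using ceiling_correct[of "lam * real n"] by linarith
      ultimately show ?thesis by simp
    qed
    have realM: "real M = real r * (30 * real r + 1) * real D + 1" unfolding M_def by (simp add: algebra_simps)
    have Mlt: "real M < 600 * L * (real r)^2 * real n"
    proof -
      have Q0: "real r * (30 * real r + 1) \<ge> 0" by simp
      have "real M \<le> real r * (30 * real r + 1) * (lam * real n + 1) + 1"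
        unfolding realM using mult_left_mono[OF Dle Q0] by simp
      also have "\<dots> = real r * (30 * real r + 1) * lam * real n + real r * (30 * real r + 1) + 1"
        by (simp add: algebra_simps)
      also have "\<dots> \<le> (600 * L * (real r)^2 - 10 * (real r)^2) * real n + real r * (30 * real r + 1) + 1"
        using mult_right_mono[OF lamb, of "real n"] unfolding L_def by simp
      also have "\<dots> < 600 * L * (real r)^2 * real n"
      proof -
        have "4 * (real r)^2 \<le> real n * (real r)^2" by (rule mult_right_mono[OF Rn]) simp
        then have "10 * (real r)^2 * real n \<ge> 40 * (real r)^2" by simp
        moreover have "40 * (real r)^2 > real r * (30 * real r + 1) + 1"
        proof -
          have h: "2 * real r \<le> real r * real r" using R by (simp add: mult_right_mono)
          have "real r * (30 * real r + 1) + 1 = 30 * (real r * real r) + real r + 1" by (simp add: ring_distribs)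
          then show ?thesis using R h unfolding power2_eq_square by linarith
        qed
        ultimately show ?thesis by (simp add: algebra_simps)
      qed
      finally show ?thesis .
    qed
    have MK: "M \<le> NN choose 2"
    proof -
      have Lr: "L \<le> real r" unfolding L_def using ln_le_minus_one[of "real r"] R by simp
      have n2: "2 * real r \<le> real n" using n2r by simp
      have "real r * (2 * real r) \<le> real r * real n" by (rule mult_left_mono[OF n2]) simp
      then have rn: "real r * real n \<ge> 2 * (real r)^2" by (simp add: power2_eq_square)
      have "(real r)^2 \<ge> 2^2" by (rule power_mono[OF R]) simp
      then have r4: "(real r)^2 \<ge> 4" by simp
      have NNr: "real NN = 30 * (real r * real n)" unfolding NN_def by simp
      have N1: "real NN - 1 \<ge> 40 * (real r)^2" unfolding NNr using rn r4 by linarith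
      have "600 * L * (real r)^2 * real n \<le> 600 * real r * (real r)^2 * real n"
        using Lr by (simp add: mult_right_mono)
      also have "\<dots> = real NN * (40 * (real r)^2) / 2" unfolding NN_def by (simp add: power2_eq_square)
      also have "\<dots> \<le> real NN * (real NN - 1) / 2"
        using mult_left_mono[OF N1, of "real NN"] by simp
      also have "\<dots> = real (NN choose 2)" by (simp add: real_choose2)
      finally have "real M < real (NN choose 2)" using Mlt by simp
      then show ?thesis by simp
    qed
    have cnt: "(NN choose (2*n)) * (((2*n) choose 2) choose t) * (((NN choose 2) - t) choose (M - t))
          < (NN choose 2) choose M"
      by (rule main_count[OF assms _ lam_def D_def t_def M_def NN_def MK]) (use n4 in simp)
    have tM: "t \<le> M" unfolding t_def M_def using assms by simp
    have aN: "2*n \<le> NN" unfolding NN_def using assms by simp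
    obtain G where G: "G \<subseteq> {e. e \<subseteq> {..<NN} \<and> card e = 2}" "card G = M"
      and sp: "\<forall>Y. Y \<subseteq> {..<NN} \<longrightarrow> card Y \<le> 2*n \<longrightarrow> card {e\<in>G. e \<subseteq> Y} < t"
      using sparse_exists[OF aN tM cnt] by blast
    have finG: "finite G"
    proof -
      have "G \<subseteq> Pow {..<NN}" using G(1) by blast
      then show ?thesis by (meson finite_Pow_iff finite_lessThan finite_subset)
    qed
    have divN: "NN div n = 30 * r" unfolding NN_def using n4 by simp
    have arr: "arrows_path G n r"
    proof (rule arrows_from_sparse[OF G(1) finG])
      show "\<forall>Y. Y \<subseteq> {..<NN} \<longrightarrow> card Y \<le> 2*n \<longrightarrow> card {e\<in>G. e \<subseteq> Y} < D + 1"
        using sp unfolding t_def .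
      show "n \<ge> 1" using n4 by simp
      show "card G > r * ((NN div n + 1) * D)" unfolding G(2) divN M_def by (simp add: algebra_simps)
    qed
    have sg: "simple_graph G" unfolding simple_graph_def using finG G(1) by blast
    have "size_ramsey_path n r \<le> M"
      unfolding size_ramsey_path_def using sg arr G(2) by (intro Least_le) blast
    then have "real (size_ramsey_path n r) \<le> real M" by simp
    then show "real (size_ramsey_path n r) < 600 * ln (real r) * (real r)^2 * real n"
      using Mlt unfolding L_def by simp
  qed
qed


end
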